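(* Let $V$ be a finite-dimensional real vector space with a Lorentzian inner product $g$, and let $V=E_1\oplus\cdots\oplus E_r$ ($r\ge1$) be a $g$-orthogonal direct sum of subspaces on each of which $g$ is non-degenerate, with $E_r$ Lorentzian. For $1\le\beta\le r$ let $g_\beta(X,Y)=g(X_\beta,Y_\beta)$, where $X_\beta,Y_\beta$ are the $E_\beta$-components. Let $p\in E_r$ be a non-zero light-like vector and $\theta=g(p,\cdot)$. Let $\bar g_1=g,\bar g_2,\dots,\bar g_{r+1}$ be linearly independent symmetric bilinear forms on $V$ with $$\bar g_\alpha=\sum_{\beta=1}^r C_{\beta\alpha}g_\beta+C_{r+1\,\alpha}\,\theta\otimes\theta,$$ and assume $C_{r\alpha}=0$ and $C_{r+1\,\alpha}\neq0$ for all $2\le\alpha\le r+1$. Let $W=\bigcap_{\alpha=2}^{r+1}\ker\bar g_\alpha$ and let $W^{\perp_g}$ be its $g$-orthogonal complement. Then $$\{X\in V\mid \bar g_\alpha(X,Y)=0\text{ for all }2\le\alpha\le r+1\text{ and all }Y\in W^{\perp_g}\}=E_r.$$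
   Context: For a symmetric bilinear form $b$ on $V$, $\ker b=\{X\in V\mid b(X,Y)=0\ \forall Y\in V\}$. *)

theory Defs
  imports "HOL-Analysis.Analysis"
begin

definition sym_bilinear :: "('a::real_vector \<Rightarrow> 'a \<Rightarrow> real) \<Rightarrow> bool" where
  "sym_bilinear b \<longleftrightarrow> bilinear b \<and> (\<forall>x y. b x y = b y x)"

definition kerb :: "('a \<Rightarrow> 'a \<Rightarrow> real) \<Rightarrow> 'a set" where
  "kerb b = {X. \<forall>Y. b X Y = 0}"

definition nondegenerate_on :: "('a \<Rightarrow> 'a \<Rightarrow> real) \<Rightarrow> 'a::real_vector set \<Rightarrow> bool" where
  "nondegenerate_on b S \<longleftrightarrow> (\<forall>x\<in>S. (\<forall>y\<in>S. b x y = 0) \<longrightarrow> x = 0)"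

definition neg_index :: "('a::euclidean_space \<Rightarrow> 'a \<Rightarrow> real) \<Rightarrow> 'a set \<Rightarrow> nat" where
  "neg_index b S = Max {dim U | U. subspace U \<and> U \<subseteq> S \<and> (\<forall>x\<in>U. x \<noteq> 0 \<longrightarrow> b x x < 0)}"

definition lorentzian_on :: "('a::euclidean_space \<Rightarrow> 'a \<Rightarrow> real) \<Rightarrow> 'a set \<Rightarrow> bool" where
  "lorentzian_on b S \<longleftrightarrow> nondegenerate_on b S \<and> neg_index b S = 1"

definition lorentzian :: "('a::euclidean_space \<Rightarrow> 'a \<Rightarrow> real) \<Rightarrow> bool" where
  "lorentzian b \<longleftrightarrow> sym_bilinear b \<and> lorentzian_on b UNIV"

definition direct_sum :: "(nat \<Rightarrow> 'a::real_vector set) \<Rightarrow> nat \<Rightarrow> bool" where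
  "direct_sum E r \<longleftrightarrow>
     (\<forall>i\<in>{1..r}. subspace (E i)) \<and>
     (\<forall>v. \<exists>x. (\<forall>i\<in>{1..r}. x i \<in> E i) \<and> v = (\<Sum>i=1..r. x i)) \<and>
     (\<forall>x. (\<forall>i\<in>{1..r}. x i \<in> E i) \<and> (\<Sum>i=1..r. x i) = 0 \<longrightarrow> (\<forall>i\<in>{1..r}. x i = 0))"

definition dcomp :: "(nat \<Rightarrow> 'a::real_vector set) \<Rightarrow> nat \<Rightarrow> nat \<Rightarrow> 'a \<Rightarrow> 'a" where
  "dcomp E r \<beta> v = (THE y. \<exists>x. (\<forall>i\<in>{1..r}. x i \<in> E i) \<and> v = (\<Sum>i=1..r. x i) \<and> y = x \<beta>)"

definition gcomp :: "('a::real_vector \<Rightarrow> 'a \<Rightarrow> real) \<Rightarrow> (nat \<Rightarrow> 'a set) \<Rightarrow> nat \<Rightarrow> nat \<Rightarrow> 'a \<Rightarrow> 'a \<Rightarrow> real" where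
  "gcomp g E r \<beta> X Y = g (dcomp E r \<beta> X) (dcomp E r \<beta> Y)"

definition g_orth_compl :: "('a \<Rightarrow> 'a \<Rightarrow> real) \<Rightarrow> 'a set \<Rightarrow> 'a set" where
  "g_orth_compl g W = {Y. \<forall>w\<in>W. g w Y = 0}"

end

theory Submission
  imports Defs
begin

lemma bil_sum_left:
  assumes "bilinear h"
  shows "h (sum f S) y = (\<Sum>i\<in>S. h (f i) y)"
proof -
  interpret l: linear "\<lambda>x. h x y" using assms by (simp add: bilinear_def)
  show ?thesis by (simp add: l.sum)
qed

lemma dcomp_eq:
  assumes ds: "direct_sum E r" and x: "\<forall>i\<in>{1..r}. x i \<in> E i" and v: "v = (\<Sum>i=1..r. x i)"
    and b: "\<beta> \<in> {1..r}"
  shows "dcomp E r \<beta> v = x \<beta>"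
  unfolding dcomp_def
proof (rule the_equality)
  show "\<exists>x'. (\<forall>i\<in>{1..r}. x' i \<in> E i) \<and> v = (\<Sum>i=1..r. x' i) \<and> x \<beta> = x' \<beta>"
    using x v by blast
next
  fix y assume "\<exists>x'. (\<forall>i\<in>{1..r}. x' i \<in> E i) \<and> v = (\<Sum>i=1..r. x' i) \<and> y = x' \<beta>"
  then obtain x' where x': "\<forall>i\<in>{1..r}. x' i \<in> E i" "v = (\<Sum>i=1..r. x' i)" "y = x' \<beta>" by blast
  have sub: "\<forall>i\<in>{1..r}. subspace (E i)" using ds unfolding direct_sum_def by blast
  have h1: "\<forall>i\<in>{1..r}. (\<lambda>i. x' i - x i) i \<in> E i" using sub x x' by (auto intro: subspace_diff)
  have h2: "(\<Sum>i=1..r. (\<lambda>i. x' i - x i) i) = 0"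
    using v x' by (simp add: sum_subtractf)
  have u: "\<And>x. (\<forall>i\<in>{1..r}. x i \<in> E i) \<Longrightarrow> sum x {1..r} = 0 \<Longrightarrow> \<forall>i\<in>{1..r}. x i = 0"
    using ds unfolding direct_sum_def by blast
  have "\<forall>i\<in>{1..r}. x' i - x i = 0" using u[OF h1 h2] by simp
  then show "y = x \<beta>" using b x' by auto
qed

lemma dcomp_props:
  assumes ds: "direct_sum E r"
  shows "\<forall>\<beta>\<in>{1..r}. dcomp E r \<beta> v \<in> E \<beta>" and "v = (\<Sum>i=1..r. dcomp E r i v)"
proof -
  obtain x where x: "\<forall>i\<in>{1..r}. x i \<in> E i" "v = (\<Sum>i=1..r. x i)"
    using ds unfolding direct_sum_def by blast
  have e: "\<forall>\<beta>\<in>{1..r}. dcomp E r \<beta> v = x \<beta>" using dcomp_eq[OF ds x] by blast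
  show "\<forall>\<beta>\<in>{1..r}. dcomp E r \<beta> v \<in> E \<beta>" using e x by auto
  show "v = (\<Sum>i=1..r. dcomp E r i v)" using e x(2) by (auto intro: sum.cong)
qed

lemma dcomp_in:
  assumes ds: "direct_sum E r" and v: "v \<in> E j" and j: "j \<in> {1..r}" and b: "\<beta> \<in> {1..r}"
  shows "dcomp E r \<beta> v = (if \<beta> = j then v else 0)"
proof -
  have sub: "\<forall>i\<in>{1..r}. subspace (E i)" using ds unfolding direct_sum_def by blast
  have "\<forall>i\<in>{1..r}. (\<lambda>i. if i = j then v else 0) i \<in> E i" using sub v by (auto intro: subspace_0)
  moreover have "v = (\<Sum>i=1..r. (\<lambda>i. if i = j then v else 0) i)" using j by simp
  ultimately show ?thesis using dcomp_eq[OF ds _ _ b, of "\<lambda>i. if i = j then v else 0" v] by simp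
qed

lemma dep:
  fixes v :: "'a \<Rightarrow> 'b \<Rightarrow> real"
  assumes "finite B" "finite A" "card B < card A"
  shows "\<exists>c. (\<exists>a\<in>A. c a \<noteq> 0) \<and> (\<forall>b\<in>B. (\<Sum>a\<in>A. c a * v a b) = 0)"
  using assms
proof (induction B arbitrary: A v rule: finite_induct)
  case empty
  then obtain a where "a \<in> A" by fastforce
  then show ?case by (rule_tac x="\<lambda>x. 1" in exI) auto
next
  case (insert b B)
  show ?case
  proof (cases "\<forall>a\<in>A. v a b = 0")
    case True
    from insert have "card B < card A" by simp
    then obtain c where c: "\<exists>a\<in>A. c a \<noteq> 0" "\<forall>b\<in>B. (\<Sum>a\<in>A. c a * v a b) = 0"
      using insert by blast
    show ?thesis using c True by (rule_tac x=c in exI) auto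
  next
    case False
    then obtain a0 where a0: "a0 \<in> A" "v a0 b \<noteq> 0" by blast
    define A' where "A' = A - {a0}"
    define w where "w = (\<lambda>a b'. v a b' - v a b / v a0 b * v a0 b')"
    have "card B < card A'" using insert a0 unfolding A'_def by (simp add: card_Diff_singleton)
    moreover have "finite A'" using insert unfolding A'_def by simp
    ultimately obtain c' where c': "\<exists>a\<in>A'. c' a \<noteq> 0" "\<forall>b'\<in>B. (\<Sum>a\<in>A'. c' a * w a b') = 0"
      using insert.IH by blast
    define S where "S = (\<Sum>a\<in>A'. c' a * v a b)"
    define c where "c = c'(a0 := - S / v a0 b)"
    have a0A': "a0 \<notin> A'" unfolding A'_def by simp
    have split: "(\<Sum>a\<in>A. c a * v a b'') = - S / v a0 b * v a0 b'' + (\<Sum>a\<in>A'. c' a * v a b'')" for b''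
    proof -
      have "(\<Sum>a\<in>A. c a * v a b'') = c a0 * v a0 b'' + (\<Sum>a\<in>A'. c a * v a b'')"
        unfolding A'_def using a0 insert by (simp add: sum.remove)
      also have "(\<Sum>a\<in>A'. c a * v a b'') = (\<Sum>a\<in>A'. c' a * v a b'')"
        using a0A' unfolding c_def by (intro sum.cong) auto
      finally show ?thesis unfolding c_def by simp
    qed
    have "\<forall>b'\<in>insert b B. (\<Sum>a\<in>A. c a * v a b') = 0"
    proof
      fix b' assume "b' \<in> insert b B"
      then show "(\<Sum>a\<in>A. c a * v a b') = 0"
      proof
        assume "b' = b" then show ?thesis using split[of b] a0 unfolding S_def by simp
      next
        assume bB: "b' \<in> B"
        have "0 = (\<Sum>a\<in>A'. c' a * w a b')" using c' bB by simp
        also have "\<dots> = (\<Sum>a\<in>A'. c' a * v a b' - (c' a * v a b) * (v a0 b' / v a0 b))"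
          unfolding w_def by (intro sum.cong) (simp_all add: algebra_simps)
        also have "\<dots> = (\<Sum>a\<in>A'. c' a * v a b') - S * (v a0 b' / v a0 b)"
          unfolding S_def by (simp add: sum_subtractf sum_distrib_right sum_divide_distrib)
        also have "\<dots> = (\<Sum>a\<in>A'. c' a * v a b') - S / v a0 b * v a0 b'" by simp
        finally show ?thesis using split[of b'] by simp
      qed
    qed
    moreover have "\<exists>a\<in>A. c a \<noteq> 0" using c' a0A' unfolding c_def A'_def by auto
    ultimately show ?thesis by blast
  qed
qed

theorem lemma3:
  fixes g :: "'a::euclidean_space \<Rightarrow> 'a \<Rightarrow> real"
    and E :: "nat \<Rightarrow> 'a set" and r :: nat and p :: 'a
    and gb :: "nat \<Rightarrow> 'a \<Rightarrow> 'a \<Rightarrow> real" and C :: "nat \<Rightarrow> nat \<Rightarrow> real"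
  assumes "r \<ge> 1"
    and "lorentzian g"
    and "direct_sum E r"
    and "\<forall>i\<in>{1..r}. \<forall>j\<in>{1..r}. i \<noteq> j \<longrightarrow> (\<forall>x\<in>E i. \<forall>y\<in>E j. g x y = 0)"
    and "\<forall>i\<in>{1..r}. nondegenerate_on g (E i)"
    and "lorentzian_on g (E r)"
    and "p \<in> E r" and "p \<noteq> 0" and "g p p = 0"
    and "\<forall>\<alpha>\<in>{1..r+1}. sym_bilinear (gb \<alpha>)"
    and "gb 1 = g"
    and "\<forall>c. (\<forall>X Y. (\<Sum>\<alpha>=1..r+1. c \<alpha> * gb \<alpha> X Y) = 0) \<longrightarrow> (\<forall>\<alpha>\<in>{1..r+1}. c \<alpha> = 0)"
    and "\<forall>\<alpha>\<in>{1..r+1}. \<forall>X Y. gb \<alpha> X Y =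
            (\<Sum>\<beta>=1..r. C \<beta> \<alpha> * gcomp g E r \<beta> X Y) + C (r+1) \<alpha> * (g p X * g p Y)"
    and "\<forall>\<alpha>\<in>{2..r+1}. C r \<alpha> = 0 \<and> C (r+1) \<alpha> \<noteq> 0"
  shows "{X. \<forall>\<alpha>\<in>{2..r+1}. \<forall>Y\<in>g_orth_compl g (\<Inter>\<alpha>\<in>{2..r+1}. kerb (gb \<alpha>)). gb \<alpha> X Y = 0} = E r"
proof -
  note r1 = assms(1) and ds = assms(3) and orth = assms(4) and nd = assms(5) and pE = assms(7)
    and gpp = assms(9) and symb = assms(10) and indep = assms(12) and gbdef = assms(13) and Cc = assms(14)
  have bg: "bilinear g" and gsym: "\<And>x y. g x y = g y x"
    using assms(2) unfolding lorentzian_def sym_bilinear_def by auto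
  have compE: "\<And>v \<beta>. \<beta>\<in>{1..r} \<Longrightarrow> dcomp E r \<beta> v \<in> E \<beta>" using dcomp_props(1)[OF ds] by blast
  have compS: "\<And>v. v = (\<Sum>i=1..r. dcomp E r i v)" using dcomp_props(2)[OF ds] by blast
  have rr: "r \<in> {1..r}" using r1 by simp
  have gY: "g w Y = g (dcomp E r \<beta> w) Y" if Y: "Y \<in> E \<beta>" and b: "\<beta>\<in>{1..r}" for w Y \<beta>
  proof -
    have "g w Y = (\<Sum>i=1..r. g (dcomp E r i w) Y)"
      using bil_sum_left[OF bg] compS[of w] by metis
    also have "\<dots> = (\<Sum>i=1..r. if i = \<beta> then g (dcomp E r \<beta> w) Y else 0)"
      using orth compE Y b by (intro sum.cong) auto
    also have "\<dots> = g (dcomp E r \<beta> w) Y" using b by simp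
    finally show ?thesis .
  qed
  have gbY: "gb \<alpha> w Y = C \<beta> \<alpha> * g (dcomp E r \<beta> w) Y + C (r+1) \<alpha> * (g p w * g p Y)"
    if a: "\<alpha>\<in>{1..r+1}" and Y: "Y \<in> E \<beta>" and b: "\<beta>\<in>{1..r}" for \<alpha> w Y \<beta>
  proof -
    have "(\<Sum>\<gamma>=1..r. C \<gamma> \<alpha> * gcomp g E r \<gamma> w Y) = (\<Sum>\<gamma>=1..r. if \<gamma> = \<beta> then C \<beta> \<alpha> * g (dcomp E r \<beta> w) Y else 0)"
      unfolding gcomp_def using dcomp_in[OF ds Y b] bilinear_rzero[OF bg] by (intro sum.cong) auto
    also have "\<dots> = C \<beta> \<alpha> * g (dcomp E r \<beta> w) Y" using b by simp
    finally show ?thesis using gbdef a by simp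
  qed
  have gpY: "g p Y = 0" if "Y \<in> E \<beta>" "\<beta>\<in>{1..r}" "\<beta> \<noteq> r" for Y \<beta>
    using orth rr pE that by metis
  have gbX: "gb \<alpha> X Y = C (r+1) \<alpha> * (g p X * g p Y)" if a: "\<alpha>\<in>{2..r+1}" and X: "X \<in> E r" for \<alpha> X Y
  proof -
    have a1: "\<alpha>\<in>{1..r+1}" using a by simp
    have "gb \<alpha> X Y = gb \<alpha> Y X" using symb a1 unfolding sym_bilinear_def by blast
    also have "\<dots> = C (r+1) \<alpha> * (g p X * g p Y)" using gbY[OF a1 X rr, of Y] Cc a by simp
    finally show ?thesis .
  qed
  define W where "W = (\<Inter>\<alpha>\<in>{2..r+1}. kerb (gb \<alpha>))"
  have pW: "p \<in> W" unfolding W_def kerb_def using gbX pE gpp by simp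
  have exa: "\<exists>\<alpha>\<in>{2..r+1}. C \<beta>0 \<alpha> \<noteq> 0" if b0: "\<beta>0\<in>{1..r}" "\<beta>0 \<noteq> r" for \<beta>0
  proof (rule ccontr)
    assume "\<not> ?thesis"
    then have z: "\<forall>\<alpha>\<in>{2..r+1}. C \<beta>0 \<alpha> = 0" by auto
    define A where "A = {2..r+1}"
    define B where "B = {1..r+1} - {r} - {\<beta>0}"
    have cA: "card A = r" unfolding A_def by simp
    have cB: "card B = r - 1" unfolding B_def using b0 r1 by (simp add: card_Diff_singleton)
    obtain c where c: "\<exists>a\<in>A. c a \<noteq> 0" "\<forall>b\<in>B. (\<Sum>a\<in>A. c a * C b a) = 0"
      using dep[of B A "\<lambda>a b. C b a"] cA cB r1 unfolding A_def B_def by auto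
    define c' where "c' = (\<lambda>\<alpha>. if \<alpha> \<in> A then c \<alpha> else 0)"
    have "\<forall>X Y. (\<Sum>\<alpha>=1..r+1. c' \<alpha> * gb \<alpha> X Y) = 0"
    proof (intro allI)
      fix X Y
      define F where "F = (\<lambda>\<beta>. if \<beta> \<le> r then gcomp g E r \<beta> X Y else g p X * g p Y)"
      have gbF: "gb \<alpha> X Y = (\<Sum>\<beta>\<in>B. C \<beta> \<alpha> * F \<beta>)" if a: "\<alpha> \<in> A" for \<alpha>
      proof -
        have "gb \<alpha> X Y = (\<Sum>\<beta>=1..r. C \<beta> \<alpha> * F \<beta>) + C (r+1) \<alpha> * F (r+1)"
          using gbdef a unfolding A_def F_def by simp
        also have "\<dots> = (\<Sum>\<beta>=1..r+1. C \<beta> \<alpha> * F \<beta>)" by simp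
        also have "\<dots> = (\<Sum>\<beta>\<in>B. C \<beta> \<alpha> * F \<beta>)"
          using z Cc a unfolding A_def B_def by (intro sum.mono_neutral_cong_right) auto
        finally show ?thesis .
      qed
      have "(\<Sum>\<alpha>=1..r+1. c' \<alpha> * gb \<alpha> X Y) = (\<Sum>\<alpha>\<in>A. c \<alpha> * gb \<alpha> X Y)"
        unfolding c'_def A_def by (intro sum.mono_neutral_cong_right) auto
      also have "\<dots> = (\<Sum>\<alpha>\<in>A. \<Sum>\<beta>\<in>B. c \<alpha> * C \<beta> \<alpha> * F \<beta>)"
        using gbF by (simp add: sum_distrib_left mult.assoc)
      also have "\<dots> = (\<Sum>\<beta>\<in>B. (\<Sum>\<alpha>\<in>A. c \<alpha> * C \<beta> \<alpha>) * F \<beta>)"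
        by (subst sum.swap) (simp add: sum_distrib_right)
      also have "\<dots> = 0" using c(2) by simp
      finally show "(\<Sum>\<alpha>=1..r+1. c' \<alpha> * gb \<alpha> X Y) = 0" .
    qed
    then have "\<forall>\<alpha>\<in>{1..r+1}. c' \<alpha> = 0" using indep by blast
    moreover obtain a where "a \<in> A" "c a \<noteq> 0" using c(1) by blast
    ultimately show False unfolding c'_def A_def by (metis atLeastAtMost_iff le_trans one_le_numeral)
  qed
  show ?thesis
  proof
    show "E r \<subseteq> {X. \<forall>\<alpha>\<in>{2..r+1}. \<forall>Y\<in>g_orth_compl g (\<Inter>\<alpha>\<in>{2..r+1}. kerb (gb \<alpha>)). gb \<alpha> X Y = 0}"
    proof safe
      fix X \<alpha> Y assume X: "X \<in> E r" and a: "\<alpha>\<in>{2..r+1}"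
        and Y: "Y \<in> g_orth_compl g (\<Inter>\<alpha>\<in>{2..r+1}. kerb (gb \<alpha>))"
      have "g p Y = 0" using Y pW unfolding W_def g_orth_compl_def by blast
      then show "gb \<alpha> X Y = 0" using gbX[OF a X] by simp
    qed
  next
    show "{X. \<forall>\<alpha>\<in>{2..r+1}. \<forall>Y\<in>g_orth_compl g (\<Inter>\<alpha>\<in>{2..r+1}. kerb (gb \<alpha>)). gb \<alpha> X Y = 0} \<subseteq> E r"
    proof safe
      fix X assume XS: "\<forall>\<alpha>\<in>{2..r+1}. \<forall>Y\<in>g_orth_compl g (\<Inter>\<alpha>\<in>{2..r+1}. kerb (gb \<alpha>)). gb \<alpha> X Y = 0"
      have z: "dcomp E r \<beta> X = 0" if b: "\<beta>\<in>{1..r}" "\<beta> \<noteq> r" for \<beta>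
      proof -
        obtain \<alpha> where a: "\<alpha>\<in>{2..r+1}" "C \<beta> \<alpha> \<noteq> 0" using exa[OF b] by blast
        have a1: "\<alpha>\<in>{1..r+1}" using a by simp
        have EW: "Y \<in> g_orth_compl g W" if Y: "Y \<in> E \<beta>" for Y
          unfolding g_orth_compl_def
        proof (intro CollectI ballI)
          fix w assume "w \<in> W"
          then have "gb \<alpha> w Y = 0" unfolding W_def kerb_def using a by blast
          then have "C \<beta> \<alpha> * g (dcomp E r \<beta> w) Y = 0" using gbY[OF a1 Y b(1)] gpY[OF Y b] by simp
          then show "g w Y = 0" using a(2) gY[OF Y b(1)] by simp
        qed
        have "\<forall>Y\<in>E \<beta>. g (dcomp E r \<beta> X) Y = 0"
        proof
          fix Y assume Y: "Y \<in> E \<beta>"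
          have "gb \<alpha> X Y = 0" using XS a EW[OF Y] unfolding W_def by blast
          then show "g (dcomp E r \<beta> X) Y = 0" using gbY[OF a1 Y b(1)] gpY[OF Y b] a(2) by simp
        qed
        then show ?thesis using nd b compE unfolding nondegenerate_on_def by blast
      qed
      have "X = (\<Sum>i=1..r. dcomp E r i X)" by (rule compS)
      also have "\<dots> = (\<Sum>i=1..r. if i = r then dcomp E r r X else 0)"
        using z by (intro sum.cong) auto
      also have "\<dots> = dcomp E r r X" using rr by simp
      finally show "X \<in> E r" using compE[OF rr, of X] by simp
    qed
  qed
qed

end
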